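(* Let $m\ge1$ be an integer and $c=-k\in\mathbb Z_{\le0}$. Consider the $(m+1)$-dimensional space of solutions of $D^c_{m+1}F=0$ with ordered basis (column vector) $\mathcal B^*=(Li^*_{m,-k}(z),\ b_{m-1}(z),\dots,b_0(z))$, where $b_j(z)=\frac1{j!}z^{1-c}(\log z)^j$ and $Li^*_{m,-k}(z)=\sum_{n\ge0,\,n\ne k}\frac{z^{n+1}}{(n-k)^m}+\frac1{m!}z^{k+1}(\log z)^m$, taken as germs at $z=-1$. For $j\in\{0,1\}$, analytic continuation of $\mathcal B^*$ along $Z_j$ yields $\rho_{m,c}([Z_j])\mathcal B^*$, where $\rho_{m,c}([Z_0])$ is the upper triangular $(m+1)\times(m+1)$ matrix with $(i,l)$-entry $\frac{(2\pi i)^{l-i}}{(l-i)!}$ for $l\ge i$ and $0$ for $l<i$, and $\rho_{m,c}([Z_1])$ is the identity matrix except that its $(1,2)$-entry is $-2\pi i$. In these cases the image of $\rho_{m,c}$ lies in a unipotent subgroup of $GL(m+1,\mathbb C)$.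
   Context: $D^c_{m+1}=z^2\frac{d}{dz}\left(\frac{1-z}{z}\right)\left(z\frac{d}{dz}+c-1\right)^m$. $\log$ is the principal branch, $z^{1-c}=e^{(1-c)\log z}=z^{k+1}$; germs at the base point $z=-1$ are obtained as limits from the upper half-plane of the functions on $\mathbb C\setminus((-\infty,0]\cup[1,\infty))$ (so $\log(-1)=\pi i$). $Z_0$: a simple closed curve based at $-1$ enclosing $0$ counterclockwise and not enclosing $1$. $Z_1$: a simple closed curve based at $-1$ enclosing $1$ counterclockwise, not enclosing $0$, passing above $0$. *)

theory Defs
  imports "HOL-Complex_Analysis.Complex_Analysis"
begin

definition Omega :: "complex set" where
  "Omega = - ({z. z \<in> \<real> \<and> Re z \<le> 0} \<union> {z. z \<in> \<real> \<and> 1 \<le> Re z})"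

text \<open>Upper half-plane: germs at -1 are limits from here.\<close>
definition UHP :: "complex set" where
  "UHP = {z. 0 < Im z}"

text \<open>b_j(z) = z^(1-c) (log z)^j / j!, with c = -k, principal log.\<close>
definition bfun :: "nat \<Rightarrow> nat \<Rightarrow> complex \<Rightarrow> complex" where
  "bfun k j z = z ^ (k + 1) * (Ln z) ^ j / of_nat (fact j)"

definition Lstar_series :: "nat \<Rightarrow> nat \<Rightarrow> complex \<Rightarrow> complex" where
  "Lstar_series m k z =
     (\<Sum>n. if n = k then 0 else z ^ (n + 1) / (of_int (int n - int k)) ^ m)
     + z ^ (k + 1) * (Ln z) ^ m / of_nat (fact m)"

definition Lstar_fun :: "nat \<Rightarrow> nat \<Rightarrow> (complex \<Rightarrow> complex) \<Rightarrow> bool" where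
  "Lstar_fun m k L \<longleftrightarrow> L holomorphic_on Omega \<and>
     (\<forall>z \<in> Omega \<inter> ball 0 1. L z = Lstar_series m k z)"

text \<open>The ordered basis B* = (Li*, b_{m-1}, ..., b_0), 0-indexed.\<close>
definition Bvec :: "nat \<Rightarrow> nat \<Rightarrow> (complex \<Rightarrow> complex) \<Rightarrow> nat \<Rightarrow> complex \<Rightarrow> complex" where
  "Bvec m k L i = (if i = 0 then L else bfun k (m - i))"

definition ancont_along :: "(real \<Rightarrow> complex) \<Rightarrow> (real \<Rightarrow> complex \<Rightarrow> complex) \<Rightarrow> bool" where
  "ancont_along \<gamma> f \<longleftrightarrow>
     (\<forall>t\<in>{0..1}. \<exists>r>0. f t holomorphic_on ball (\<gamma> t) r \<and>
        (\<exists>\<delta>>0. \<forall>s\<in>{0..1}. \<bar>s - t\<bar> < \<delta> \<longrightarrow>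
            \<gamma> s \<in> ball (\<gamma> t) r \<and> (\<forall>\<^sub>F z in nhds (\<gamma> s). f s z = f t z)))"

definition monodromy_is ::
  "(real \<Rightarrow> complex) \<Rightarrow> nat \<Rightarrow> (nat \<Rightarrow> complex \<Rightarrow> complex) \<Rightarrow> (nat \<Rightarrow> nat \<Rightarrow> complex) \<Rightarrow> bool" where
  "monodromy_is \<gamma> n F M \<longleftrightarrow>
     (\<forall>i<n.
        (\<exists>f. ancont_along \<gamma> f \<and> (\<forall>\<^sub>F z in at (-1) within UHP. f 0 z = F i z)) \<and>
        (\<forall>f. ancont_along \<gamma> f \<and> (\<forall>\<^sub>F z in at (-1) within UHP. f 0 z = F i z) \<longrightarrow>
             (\<forall>\<^sub>F z in at (-1) within UHP. f 1 z = (\<Sum>l<n. M i l * F l z))))"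

definition Z0_loop :: "(real \<Rightarrow> complex) \<Rightarrow> bool" where
  "Z0_loop \<gamma> \<longleftrightarrow> simple_path \<gamma> \<and> pathstart \<gamma> = -1 \<and> pathfinish \<gamma> = -1 \<and>
     0 \<notin> path_image \<gamma> \<and> 1 \<notin> path_image \<gamma> \<and>
     winding_number \<gamma> 0 = 1 \<and> winding_number \<gamma> 1 = 0 \<and>
     path_image \<gamma> \<inter> {z. z \<in> \<real> \<and> 1 \<le> Re z} = {}"

definition Z1_loop :: "(real \<Rightarrow> complex) \<Rightarrow> bool" where
  "Z1_loop \<gamma> \<longleftrightarrow> simple_path \<gamma> \<and> pathstart \<gamma> = -1 \<and> pathfinish \<gamma> = -1 \<and>
     0 \<notin> path_image \<gamma> \<and> 1 \<notin> path_image \<gamma> \<and>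
     winding_number \<gamma> 1 = 1 \<and> winding_number \<gamma> 0 = 0 \<and>
     path_image \<gamma> \<inter> {z. Re z = 0 \<and> Im z \<le> 0} = {}"

section \<open>Matrices (square, size n, 0-indexed, as functions)\<close>

definition rho0 :: "nat \<Rightarrow> nat \<Rightarrow> complex" where
  "rho0 i l = (if i \<le> l then (2 * pi * \<i>) ^ (l - i) / of_nat (fact (l - i)) else 0)"

definition rho1 :: "nat \<Rightarrow> nat \<Rightarrow> complex" where
  "rho1 i l = (if i = l then 1 else if i = 0 \<and> l = 1 then - 2 * pi * \<i> else 0)"

definition idm :: "nat \<Rightarrow> nat \<Rightarrow> complex" where
  "idm i l = (if i = l then 1 else 0)"

definition mmul :: "nat \<Rightarrow> (nat \<Rightarrow> nat \<Rightarrow> complex) \<Rightarrow> (nat \<Rightarrow> nat \<Rightarrow> complex) \<Rightarrow> nat \<Rightarrow> nat \<Rightarrow> complex" where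
  "mmul n A B i l = (\<Sum>j<n. A i j * B j l)"

definition meq :: "nat \<Rightarrow> (nat \<Rightarrow> nat \<Rightarrow> complex) \<Rightarrow> (nat \<Rightarrow> nat \<Rightarrow> complex) \<Rightarrow> bool" where
  "meq n A B \<longleftrightarrow> (\<forall>i<n. \<forall>l<n. A i l = B i l)"

fun mpow :: "nat \<Rightarrow> (nat \<Rightarrow> nat \<Rightarrow> complex) \<Rightarrow> nat \<Rightarrow> nat \<Rightarrow> nat \<Rightarrow> complex" where
  "mpow n A 0 = idm"
| "mpow n A (Suc p) = mmul n A (mpow n A p)"

definition unipotent_subgroup :: "nat \<Rightarrow> (nat \<Rightarrow> nat \<Rightarrow> complex) set \<Rightarrow> bool" where
  "unipotent_subgroup n U \<longleftrightarrow>
     idm \<in> U \<and>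
     (\<forall>A\<in>U. \<forall>B\<in>U. \<exists>C\<in>U. meq n C (mmul n A B)) \<and>
     (\<forall>A\<in>U. \<exists>B\<in>U. meq n (mmul n A B) idm \<and> meq n (mmul n B A) idm) \<and>
     (\<forall>A\<in>U. meq n (mpow n (\<lambda>i l. A i l - idm i l) n) (\<lambda>i l. 0))"

end

theory Submission
  imports Defs
begin


lemma Re_div_pos: "norm (w - a) < norm a \<Longrightarrow> 0 < Re (w / a)"
proof -
  assume h: "norm (w - a) < norm a"
  then have a0: "a \<noteq> 0" by auto
  have "w / a = 1 + (w - a) / a" using a0 by (simp add: field_simps)
  moreover have "norm ((w - a) / a) < 1" using h a0 by (simp add: norm_divide)
  moreover have "- norm ((w - a) / a) \<le> Re ((w - a) / a)"
    using abs_Re_le_cmod[of "(w-a)/a"] by linarith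
  ultimately show ?thesis by simp
qed

lemma Ln_shift_eq:
  assumes "0 < Re (u / b)" "0 < Re (u / c)" "exp d = b / c" "\<bar>Im d\<bar> < pi/2"
  shows "Ln (u / b) + d = Ln (u / c)"
proof -
  have u0: "u \<noteq> 0" "b \<noteq> 0" "c \<noteq> 0" using assms(1,2) by auto
  have "exp (Ln (u / b) + d) = u / c" using u0 assms(3) by (simp add: exp_add)
  moreover have "\<bar>Im (Ln (u / b))\<bar> < pi/2" using Re_Ln_pos_lt_imp[OF assms(1)] .
  ultimately show ?thesis using assms(4)
    by (intro Ln_unique[symmetric]) auto
qed

lemma ancont_family:
  fixes \<gamma> q :: "real \<Rightarrow> complex" and A B :: "complex \<Rightarrow> complex" and \<sigma> \<tau> :: complex and e :: nat
  assumes pg: "path \<gamma>" and cq: "continuous_on {0..1} q" and ns: "norm \<sigma> = 1"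
    and nz: "\<And>t. t \<in> {0..1} \<Longrightarrow> \<sigma> * \<gamma> t + \<tau> \<noteq> 0"
    and eq: "\<And>t. t \<in> {0..1} \<Longrightarrow> exp (q t) = \<sigma> * \<gamma> t + \<tau>"
    and oV: "open V" and sV: "path_image \<gamma> \<subseteq> V"
    and hA: "A holomorphic_on V" and hB: "B holomorphic_on V"
  shows "ancont_along \<gamma> (\<lambda>t z. A z + B z * (q t + Ln ((\<sigma> * z + \<tau>) / (\<sigma> * \<gamma> t + \<tau>))) ^ e)"
  unfolding ancont_along_def
proof (intro ballI)
  fix t :: real assume t: "t \<in> {0..1}"
  define a where "a = (\<lambda>t. \<sigma> * \<gamma> t + \<tau>)"
  have key: "norm (\<sigma> * z + \<tau> - a s) = norm (z - \<gamma> s)" for z s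
  proof -
    have "\<sigma> * z + \<tau> - a s = \<sigma> * (z - \<gamma> s)" by (simp add: a_def algebra_simps)
    then show ?thesis by (simp add: norm_mult ns)
  qed
  have Re_pos: "0 < Re ((\<sigma> * z + \<tau>) / a s)" if "norm (z - \<gamma> s) < norm (a s)" for z s
    using Re_div_pos[of "\<sigma> * z + \<tau>" "a s"] key[of z s] that by simp
  have gt: "\<gamma> t \<in> V" using sV t unfolding path_image_def by auto
  obtain e0 where e0: "e0 > 0" "ball (\<gamma> t) e0 \<subseteq> V" using oV gt openE by blast
  define r where "r = min e0 (norm (a t))"
  have at0: "a t \<noteq> 0" using nz t by (simp add: a_def)
  have r0: "r > 0" using e0 at0 by (simp add: r_def)
  have rV: "ball (\<gamma> t) r \<subseteq> V" using e0 by (auto simp: r_def)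
  have hol: "(\<lambda>z. A z + B z * (q t + Ln ((\<sigma> * z + \<tau>) / a t)) ^ e) holomorphic_on ball (\<gamma> t) r"
  proof (intro holomorphic_intros)
    show "A holomorphic_on ball (\<gamma> t) r" using hA rV holomorphic_on_subset by blast
    show "B holomorphic_on ball (\<gamma> t) r" using hB rV holomorphic_on_subset by blast
    fix z assume z: "z \<in> ball (\<gamma> t) r"
    have "norm (z - \<gamma> t) < norm (a t)" using z by (simp add: r_def dist_norm norm_minus_commute)
    then have "0 < Re ((\<sigma> * z + \<tau>) / a t)" by (rule Re_pos)
    then show "(\<sigma> * z + \<tau>) / a t \<notin> \<real>\<^sub>\<le>\<^sub>0" by (auto simp: complex_nonpos_Reals_iff)
  qed (use at0 in auto)
  have cg: "continuous_on {0..1} \<gamma>" using pg by (simp add: path_def)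
  obtain d1 where d1: "d1 > 0" "\<And>s. s \<in> {0..1} \<Longrightarrow> dist s t < d1 \<Longrightarrow> dist (\<gamma> s) (\<gamma> t) < r"
    using cg t r0 unfolding continuous_on_iff by metis
  obtain d2 where d2: "d2 > 0" "\<And>s. s \<in> {0..1} \<Longrightarrow> dist s t < d2 \<Longrightarrow> dist (q s) (q t) < pi/2"
    using cq t unfolding continuous_on_iff by (metis pi_half_gt_zero)
  show "\<exists>r>0. (\<lambda>z. A z + B z * (q t + Ln ((\<sigma> * z + \<tau>) / (\<sigma> * \<gamma> t + \<tau>))) ^ e) holomorphic_on ball (\<gamma> t) r \<and>
        (\<exists>\<delta>>0. \<forall>s\<in>{0..1}. \<bar>s - t\<bar> < \<delta> \<longrightarrow> \<gamma> s \<in> ball (\<gamma> t) r \<and>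
           (\<forall>\<^sub>F z in nhds (\<gamma> s). A z + B z * (q s + Ln ((\<sigma> * z + \<tau>) / (\<sigma> * \<gamma> s + \<tau>))) ^ e =
                                  A z + B z * (q t + Ln ((\<sigma> * z + \<tau>) / (\<sigma> * \<gamma> t + \<tau>))) ^ e))"
  proof (intro exI conjI)
    show "r > 0" by (rule r0)
    show "(\<lambda>z. A z + B z * (q t + Ln ((\<sigma> * z + \<tau>) / (\<sigma> * \<gamma> t + \<tau>))) ^ e) holomorphic_on ball (\<gamma> t) r"
      using hol by (simp add: a_def)
    show "min d1 d2 > 0" using d1 d2 by simp
    show "\<forall>s\<in>{0..1}. \<bar>s - t\<bar> < min d1 d2 \<longrightarrow> \<gamma> s \<in> ball (\<gamma> t) r \<and>
           (\<forall>\<^sub>F z in nhds (\<gamma> s). A z + B z * (q s + Ln ((\<sigma> * z + \<tau>) / (\<sigma> * \<gamma> s + \<tau>))) ^ e =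
                                  A z + B z * (q t + Ln ((\<sigma> * z + \<tau>) / (\<sigma> * \<gamma> t + \<tau>))) ^ e)"
    proof (intro ballI impI conjI)
      fix s assume s: "s \<in> {0..1}" "\<bar>s - t\<bar> < min d1 d2"
      have gs: "dist (\<gamma> s) (\<gamma> t) < r" using d1(2)[OF s(1)] s(2) by (simp add: dist_real_def)
      then show "\<gamma> s \<in> ball (\<gamma> t) r" by (simp add: dist_commute)
      have qs: "dist (q s) (q t) < pi/2" using d2(2)[OF s(1)] s(2) by (simp add: dist_real_def)
      have as0: "a s \<noteq> 0" using nz s(1) by (simp add: a_def)
      define W where "W = ball (\<gamma> t) r \<inter> ball (\<gamma> s) (norm (a s))"
      have "open W" "\<gamma> s \<in> W" using gs as0 by (auto simp: W_def dist_commute)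
      moreover have "\<forall>z\<in>W. A z + B z * (q s + Ln ((\<sigma> * z + \<tau>) / a s)) ^ e =
                          A z + B z * (q t + Ln ((\<sigma> * z + \<tau>) / a t)) ^ e"
      proof
        fix z assume z: "z \<in> W"
        have p1: "0 < Re ((\<sigma> * z + \<tau>) / a s)"
          using z by (intro Re_pos) (simp add: W_def dist_norm norm_minus_commute)
        have p2: "0 < Re ((\<sigma> * z + \<tau>) / a t)"
          using z by (intro Re_pos) (auto simp: W_def r_def dist_norm norm_minus_commute)
        have ex: "exp (q s - q t) = a s / a t" using eq s(1) t by (simp add: exp_diff a_def)
        have im: "\<bar>Im (q s - q t)\<bar> < pi/2"
          using qs abs_Im_le_cmod[of "q s - q t"] by (simp add: dist_norm)
        have "Ln ((\<sigma> * z + \<tau>) / a s) + (q s - q t) = Ln ((\<sigma> * z + \<tau>) / a t)"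
          by (rule Ln_shift_eq[OF p1 p2 ex im])
        then have "q s + Ln ((\<sigma> * z + \<tau>) / a s) = q t + Ln ((\<sigma> * z + \<tau>) / a t)"
          by (simp add: algebra_simps)
        then show "A z + B z * (q s + Ln ((\<sigma> * z + \<tau>) / a s)) ^ e =
                   A z + B z * (q t + Ln ((\<sigma> * z + \<tau>) / a t)) ^ e" by simp
      qed
      ultimately show "\<forall>\<^sub>F z in nhds (\<gamma> s). A z + B z * (q s + Ln ((\<sigma> * z + \<tau>) / (\<sigma> * \<gamma> s + \<tau>))) ^ e =
                                  A z + B z * (q t + Ln ((\<sigma> * z + \<tau>) / (\<sigma> * \<gamma> t + \<tau>))) ^ e"
        unfolding eventually_nhds a_def by blast
    qed
  qed
qed


lemma agree_ball:
  assumes "f holomorphic_on ball c r" "g holomorphic_on ball c r" "w \<in> ball c r"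
    "eventually (\<lambda>z. f z = g z) (nhds w)"
  shows "\<forall>z\<in>ball c r. f z = g z"
proof -
  obtain S where S: "open S" "w \<in> S" "\<forall>x\<in>S. f x = g x" using assms(4) unfolding eventually_nhds by blast
  show ?thesis
  proof
    fix z assume z: "z \<in> ball c r"
    show "f z = g z"
    proof (rule analytic_continuation_open[of "S \<inter> ball c r" "ball c r" f g z])
      show "open (S \<inter> ball c r)" using S(1) by auto
      show "S \<inter> ball c r \<noteq> {}" using S(2) assms(3) by auto
    qed (use S assms z in auto)
  qed
qed

lemma ancont_unique:
  assumes pg: "path \<gamma>" and af: "ancont_along \<gamma> f" and ag: "ancont_along \<gamma> g"
    and e0: "eventually (\<lambda>z. f 0 z = g 0 z) (nhds (\<gamma> 0))"
  shows "eventually (\<lambda>z. f 1 z = g 1 z) (nhds (\<gamma> 1))"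
proof -
  define P where "P = (\<lambda>t. eventually (\<lambda>z. f t z = g t z) (nhds (\<gamma> t)))"
  have "P 1"
  proof (rule connected_induction_simple[of "{0..1::real}" 0 1 P])
    show "connected {0..1::real}" by simp
    show "(0::real) \<in> {0..1}" "(1::real) \<in> {0..1}" by auto
    show "P 0" using e0 by (simp add: P_def)
    fix t :: real assume t: "t \<in> {0..1}"
    obtain rf where rf0: "rf > 0" "f t holomorphic_on ball (\<gamma> t) rf"
      "\<exists>\<delta>>0. \<forall>s\<in>{0..1}. \<bar>s - t\<bar> < \<delta> \<longrightarrow> \<gamma> s \<in> ball (\<gamma> t) rf \<and> (\<forall>\<^sub>F z in nhds (\<gamma> s). f s z = f t z)"
      using af t unfolding ancont_along_def by blast
    then obtain df where rf: "rf > 0" "f t holomorphic_on ball (\<gamma> t) rf" "df > 0"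
      "\<And>s. s \<in> {0..1} \<Longrightarrow> \<bar>s - t\<bar> < df \<Longrightarrow> \<gamma> s \<in> ball (\<gamma> t) rf \<and> (\<forall>\<^sub>F z in nhds (\<gamma> s). f s z = f t z)"
      by blast
    obtain rg where rg0: "rg > 0" "g t holomorphic_on ball (\<gamma> t) rg"
      "\<exists>\<delta>>0. \<forall>s\<in>{0..1}. \<bar>s - t\<bar> < \<delta> \<longrightarrow> \<gamma> s \<in> ball (\<gamma> t) rg \<and> (\<forall>\<^sub>F z in nhds (\<gamma> s). g s z = g t z)"
      using ag t unfolding ancont_along_def by blast
    then obtain dg where rg: "rg > 0" "g t holomorphic_on ball (\<gamma> t) rg" "dg > 0"
      "\<And>s. s \<in> {0..1} \<Longrightarrow> \<bar>s - t\<bar> < dg \<Longrightarrow> \<gamma> s \<in> ball (\<gamma> t) rg \<and> (\<forall>\<^sub>F z in nhds (\<gamma> s). g s z = g t z)"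
      by blast
    define r where "r = min rf rg"
    define d where "d = min df dg"
    have hf: "f t holomorphic_on ball (\<gamma> t) r" using rf(2) by (rule holomorphic_on_subset) (auto simp: r_def)
    have hg: "g t holomorphic_on ball (\<gamma> t) r" using rg(2) by (rule holomorphic_on_subset) (auto simp: r_def)
    have near: "\<gamma> s \<in> ball (\<gamma> t) r \<and> (\<forall>\<^sub>F z in nhds (\<gamma> s). f s z = f t z) \<and> (\<forall>\<^sub>F z in nhds (\<gamma> s). g s z = g t z)"
      if "s \<in> {0..1} \<inter> ball t d" for s
    proof -
      have "\<bar>s - t\<bar> < df" "\<bar>s - t\<bar> < dg" using that by (auto simp: d_def dist_real_def)
      then show ?thesis using rf(4)[of s] rg(4)[of s] that by (auto simp: r_def)
    qed
    show "\<exists>T. openin (top_of_set {0..1}) T \<and> t \<in> T \<and> (\<forall>x\<in>T. \<forall>y\<in>T. P x \<longrightarrow> P y)"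
    proof (intro exI conjI ballI impI)
      show "openin (top_of_set {0..1}) ({0..1} \<inter> ball t d)" by auto
      show "t \<in> {0..1} \<inter> ball t d" using t rf rg by (auto simp: d_def)
      fix x y assume x: "x \<in> {0..1} \<inter> ball t d" and y: "y \<in> {0..1} \<inter> ball t d" and Px: "P x"
      have nx: "\<gamma> x \<in> ball (\<gamma> t) r" "\<forall>\<^sub>F z in nhds (\<gamma> x). f x z = f t z" "\<forall>\<^sub>F z in nhds (\<gamma> x). g x z = g t z"
        using near[OF x] by auto
      have ny: "\<gamma> y \<in> ball (\<gamma> t) r" "\<forall>\<^sub>F z in nhds (\<gamma> y). f y z = f t z" "\<forall>\<^sub>F z in nhds (\<gamma> y). g y z = g t z"
        using near[OF y] by auto
      have Px': "\<forall>\<^sub>F z in nhds (\<gamma> x). f x z = g x z" using Px by (simp add: P_def)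
      have "\<forall>\<^sub>F z in nhds (\<gamma> x). f t z = g t z"
        using Px' nx(2,3) by eventually_elim auto
      then have ball_eq: "\<forall>z\<in>ball (\<gamma> t) r. f t z = g t z"
        using agree_ball[OF hf hg nx(1)] by blast
      have "\<forall>\<^sub>F z in nhds (\<gamma> y). f t z = g t z"
        unfolding eventually_nhds using ball_eq ny(1) by (intro exI[of _ "ball (\<gamma> t) r"]) auto
      then have "\<forall>\<^sub>F z in nhds (\<gamma> y). f y z = g y z"
        using ny(2,3) by eventually_elim auto
      then show "P y" by (simp add: P_def)
    qed
  qed
  then show ?thesis by (simp add: P_def)
qed

lemma eventually_within_to_nhds:
  assumes hf: "f holomorphic_on ball c r" and hg: "g holomorphic_on ball c r" and r: "r > 0" and c: "Im c = 0"
    and ev: "eventually (\<lambda>z. f z = g z) (at c within UHP)"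
  shows "eventually (\<lambda>z. f z = g z) (nhds c)"
proof -
  obtain d where d: "d > 0" "\<forall>x\<in>UHP. x \<noteq> c \<and> dist x c < d \<longrightarrow> f x = g x"
    using ev unfolding eventually_at by blast
  define U where "U = ball c (min d r) \<inter> UHP"
  have "c islimpt U"
    unfolding islimpt_approachable
  proof (intro allI impI)
    fix \<epsilon> :: real assume e: "\<epsilon> > 0"
    define h where "h = min \<epsilon> (min d r) / 2"
    have h: "h > 0" "h < \<epsilon>" "h < min d r" using e d r by (auto simp: h_def)
    have "c + \<i> * complex_of_real h \<in> U"
      using h c by (auto simp: U_def UHP_def dist_norm norm_mult)
    moreover have "c + \<i> * complex_of_real h \<noteq> c" using h by auto
    moreover have "dist (c + \<i> * complex_of_real h) c < \<epsilon>" using h by (simp add: dist_norm norm_mult)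
    ultimately show "\<exists>x'\<in>U. x' \<noteq> c \<and> dist x' c < \<epsilon>" by blast
  qed
  have "\<forall>z\<in>ball c r. f z - g z = 0"
  proof
    fix z assume z: "z \<in> ball c r"
    show "f z - g z = 0"
    proof (rule analytic_continuation[of "\<lambda>z. f z - g z" "ball c r" U c z])
      show "(\<lambda>z. f z - g z) holomorphic_on ball c r" using hf hg by (intro holomorphic_intros)
      show "U \<subseteq> ball c r" by (auto simp: U_def)
      show "c \<in> ball c r" using r by simp
      show "c islimpt U" by fact
      fix w assume w: "w \<in> U"
      have "w \<noteq> c" using w c by (auto simp: U_def UHP_def)
      then show "f w - g w = 0" using d w by (auto simp: U_def dist_commute)
    qed (use z in auto)
  qed
  then show ?thesis unfolding eventually_nhds using r
    by (intro exI[of _ "ball c r"]) auto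
qed

lemma nhds_to_within: "eventually P (nhds c) \<Longrightarrow> eventually P (at c within S)"
  by (simp add: eventually_at_filter eventually_mono)

lemma ancont_hol0:
  assumes "ancont_along \<gamma> f"
  obtains r where "r > 0" "f 0 holomorphic_on ball (\<gamma> 0) r"
proof -
  have "\<exists>r>0. f 0 holomorphic_on ball (\<gamma> 0) r" using assms unfolding ancont_along_def by auto
  then show ?thesis using that by blast
qed

lemma monodromy_from_family:
  assumes pg: "path \<gamma>" and g0: "\<gamma> 0 = -1" and g1: "\<gamma> 1 = -1"
    and fam: "\<And>i. i < n \<Longrightarrow> ancont_along \<gamma> (h i) \<and>
        (\<forall>\<^sub>F z in at (-1) within UHP. h i 0 z = F i z) \<and>
        (\<forall>\<^sub>F z in at (-1) within UHP. h i 1 z = (\<Sum>l<n. M i l * F l z))"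
  shows "monodromy_is \<gamma> n F M"
  unfolding monodromy_is_def
proof (intro allI impI)
  fix i assume i: "i < n"
  note hi = fam[OF i]
  have ex: "\<exists>f. ancont_along \<gamma> f \<and> (\<forall>\<^sub>F z in at (-1) within UHP. f 0 z = F i z)"
    using hi by blast
  {
    fix f assume f: "ancont_along \<gamma> f \<and> (\<forall>\<^sub>F z in at (-1) within UHP. f 0 z = F i z)"
    obtain r1 where r1: "r1 > 0" "f 0 holomorphic_on ball (\<gamma> 0) r1" using ancont_hol0 f by blast
    obtain r2 where r2: "r2 > 0" "h i 0 holomorphic_on ball (\<gamma> 0) r2" using ancont_hol0 hi by blast
    define r where "r = min r1 r2"
    have fa: "\<forall>\<^sub>F z in at (-1) within UHP. f 0 z = F i z" using f by blast
    have ha: "\<forall>\<^sub>F z in at (-1) within UHP. h i 0 z = F i z" using hi by blast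
    have hb: "\<forall>\<^sub>F z in at (-1) within UHP. h i 1 z = (\<Sum>l<n. M i l * F l z)" using hi by blast
    have fh: "\<forall>\<^sub>F z in at (-1) within UHP. f 0 z = h i 0 z"
      using fa ha by eventually_elim auto
    have "\<forall>\<^sub>F z in nhds (\<gamma> 0). f 0 z = h i 0 z"
    proof (rule eventually_within_to_nhds[of "f 0" "\<gamma> 0" r "h i 0"])
      show "f 0 holomorphic_on ball (\<gamma> 0) r" using r1(2) by (rule holomorphic_on_subset) (auto simp: r_def)
      show "h i 0 holomorphic_on ball (\<gamma> 0) r" using r2(2) by (rule holomorphic_on_subset) (auto simp: r_def)
    qed (use r1 r2 g0 fh in \<open>auto simp: r_def\<close>)
    then have "\<forall>\<^sub>F z in nhds (\<gamma> 1). f 1 z = h i 1 z"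
      by (rule ancont_unique[OF pg conjunct1[OF f] conjunct1[OF hi]])
    then have "\<forall>\<^sub>F z in nhds (-1). f 1 z = h i 1 z" by (simp add: g1)
    then have "\<forall>\<^sub>F z in at (-1) within UHP. f 1 z = h i 1 z"
      by (rule nhds_to_within)
    then have "\<forall>\<^sub>F z in at (-1) within UHP. f 1 z = (\<Sum>l<n. M i l * F l z)"
      using hb by eventually_elim auto
  }
  note * = this
  show "(\<exists>f. ancont_along \<gamma> f \<and> (\<forall>\<^sub>F z in at (-1) within UHP. f 0 z = F i z)) \<and>
        (\<forall>f. ancont_along \<gamma> f \<and> (\<forall>\<^sub>F z in at (-1) within UHP. f 0 z = F i z) \<longrightarrow>
             (\<forall>\<^sub>F z in at (-1) within UHP. f 1 z = (\<Sum>l<n. M i l * F l z)))"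
    using * ex by blast
qed


definition S1 :: "complex set" where "S1 = - {z. z \<in> \<real> \<and> 1 \<le> Re z}"
definition NN :: "complex set" where "NN = {z. Re z = 0 \<and> Im z \<le> 0}"
definition LnD :: "complex \<Rightarrow> complex" where "LnD z = Ln (- \<i> * z) + \<i> * of_real pi / 2"

lemma closed_S1set: "closed {z::complex. z \<in> \<real> \<and> 1 \<le> Re z}"
proof -
  have "{z::complex. z \<in> \<real> \<and> 1 \<le> Re z} = {z. Im z = 0} \<inter> {z. 1 \<le> Re z}"
    by (auto simp: complex_is_Real_iff)
  moreover have "closed {z::complex. Im z = 0}" by (intro closed_Collect_eq) (auto intro: continuous_intros)
  moreover have "closed {z::complex. 1 \<le> Re z}" by (intro closed_Collect_le) (auto intro: continuous_intros)
  ultimately show ?thesis by auto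
qed

lemma open_S1: "open S1" unfolding S1_def using closed_S1set by (simp add: open_Compl)

lemma closed_NN: "closed NN"
proof -
  have "NN = {z. Re z = 0} \<inter> {z. Im z \<le> 0}" by (auto simp: NN_def)
  moreover have "closed {z::complex. Re z = 0}" by (intro closed_Collect_eq) (auto intro: continuous_intros)
  moreover have "closed {z::complex. Im z \<le> 0}" by (intro closed_Collect_le) (auto intro: continuous_intros)
  ultimately show ?thesis by (metis closed_Int)
qed

lemma open_NNc: "open (- NN)" using closed_NN by (simp add: open_Compl)

lemma zero_in_NN: "0 \<in> NN" by (simp add: NN_def)

lemma S1_iff: "z \<in> S1 \<longleftrightarrow> Im z \<noteq> 0 \<or> Re z < 1"
  by (auto simp: S1_def complex_is_Real_iff)

lemma NN_iff: "z \<notin> NN \<longleftrightarrow> Re z \<noteq> 0 \<or> Im z > 0"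
  by (auto simp: NN_def)

lemma ball01_S1: "ball 0 1 \<subseteq> S1"
proof
  fix z :: complex assume "z \<in> ball 0 1"
  then have "norm z < 1" by simp
  then have "Re z < 1" using complex_Re_le_cmod[of z] by linarith
  then show "z \<in> S1" by (simp add: S1_iff)
qed

lemma starlike_S1: "starlike S1"
  unfolding starlike_def
proof (intro bexI[of _ 0] ballI subsetI)
  show "0 \<in> S1" by (simp add: S1_iff)
  fix x y assume x: "x \<in> S1" and y: "y \<in> closed_segment 0 x"
  then obtain u where u: "0 \<le> u" "u \<le> 1" "y = u *\<^sub>R x" by (auto simp: closed_segment_def)
  show "y \<in> S1"
  proof (cases "u = 0")
    case True then show ?thesis using u by (simp add: S1_iff)
  next
    case False
    then have up: "u > 0" using u by simp
    have "Im y = u * Im x" "Re y = u * Re x" using u by auto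
    moreover have "u * Re x < 1" if "Re x < 1"
    proof (cases "Re x \<le> 0")
      case True then show ?thesis using up by (smt (verit) mult_nonneg_nonpos)
    next
      case False then show ?thesis using u that by (smt (verit) mult_le_cancel_right1 mult_left_le_one_le)
    qed
    ultimately show ?thesis using x up by (auto simp: S1_iff)
  qed
qed

lemma starlike_NNc: "starlike (- NN)"
  unfolding starlike_def
proof (intro bexI[of _ \<i>] ballI subsetI)
  show "\<i> \<in> - NN" by (simp add: NN_def)
  fix x y assume x: "x \<in> - NN" and y: "y \<in> closed_segment \<i> x"
  then obtain u where u: "0 \<le> u" "u \<le> 1" "y = (1 - u) *\<^sub>R \<i> + u *\<^sub>R x" by (auto simp: closed_segment_def)
  have Re: "Re y = u * Re x" and Im: "Im y = (1 - u) + u * Im x" using u by auto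
  show "y \<in> - NN"
  proof (cases "u = 0")
    case True then show ?thesis using u by (simp add: NN_def)
  next
    case False
    then have up: "u > 0" using u by simp
    show ?thesis
    proof (cases "Re x = 0")
      case True
      then have "Im x > 0" using x by (auto simp: NN_def)
      then have "Im y > 0" using Im u up by (smt (verit) mult_pos_pos)
      then show ?thesis by (simp add: NN_def)
    next
      case False
      then have "Re y \<noteq> 0" using Re up by simp
      then show ?thesis by (simp add: NN_def)
    qed
  qed
qed

lemma connected_S1_NN: "connected (S1 - NN)"
proof -
  define A where "A = {z::complex. Re z < 0} \<union> {z. Im z > 0}"
  define Bs where "Bs = {z::complex. 0 < Re z \<and> Re z < 1}"
  define C where "C = {z::complex. Im z < 0 \<and> Re z > 0}"
  have cA: "connected A"
  proof -
    have "convex {z::complex. Re z < 0}" "convex {z::complex. Im z > 0}"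
      by (auto simp: convex_halfspace_Re_lt convex_halfspace_Im_gt)
    moreover have "-1 + \<i> \<in> {z::complex. Re z < 0} \<inter> {z. Im z > 0}" by simp
    then have "{z::complex. Re z < 0} \<inter> {z. Im z > 0} \<noteq> {}" by blast
    ultimately show ?thesis unfolding A_def by (intro connected_Un convex_connected) auto
  qed
  have cB: "convex Bs"
  proof -
    have "Bs = {z. 0 < Re z} \<inter> {z. Re z < 1}" by (auto simp: Bs_def)
    then show ?thesis by (simp add: convex_Int convex_halfspace_Re_gt convex_halfspace_Re_lt)
  qed
  have cC: "convex C"
  proof -
    have "C = {z. Im z < 0} \<inter> {z. 0 < Re z}" by (auto simp: C_def)
    then show ?thesis by (simp add: convex_Int convex_halfspace_Im_lt convex_halfspace_Re_gt)
  qed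
  have "A \<union> Bs \<union> C = S1 - NN"
    by (auto simp: A_def Bs_def C_def S1_iff NN_def)
  moreover have "connected (A \<union> Bs)"
  proof (rule connected_Un[OF cA convex_connected[OF cB]])
    have "1/2 + \<i> \<in> A \<inter> Bs" by (simp add: A_def Bs_def)
    then show "A \<inter> Bs \<noteq> {}" by blast
  qed
  moreover have "1/2 - \<i> \<in> (A \<union> Bs) \<inter> C" by (simp add: Bs_def C_def)
  then have "(A \<union> Bs) \<inter> C \<noteq> {}" by blast
  ultimately show ?thesis using connected_Un convex_connected[OF cC] by metis
qed

lemma LnD_arg: "z \<notin> NN \<Longrightarrow> - \<i> * z \<notin> \<real>\<^sub>\<le>\<^sub>0"
  by (auto simp: complex_nonpos_Reals_iff NN_def)

lemma LnD_hol: "LnD holomorphic_on - NN"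
  unfolding LnD_def
  by (intro holomorphic_intros) (auto dest: LnD_arg)

lemma LnD_deriv: "z \<notin> NN \<Longrightarrow> (LnD has_field_derivative 1 / z) (at z)"
proof -
  assume z: "z \<notin> NN"
  then have z0: "z \<noteq> 0" using zero_in_NN by auto
  have "((\<lambda>z. Ln (- \<i> * z) + \<i> * of_real pi / 2) has_field_derivative (inverse (- \<i> * z) * (- \<i>) + 0)) (at z)"
    by (rule derivative_eq_intros refl | use LnD_arg[OF z] in auto)+
  moreover have "inverse (- \<i> * z) * (- \<i>) + 0 = 1 / z" using z0 by (simp add: field_simps)
  ultimately show ?thesis unfolding LnD_def[abs_def] by simp
qed

lemma exp_LnD: "z \<notin> NN \<Longrightarrow> exp (LnD z) = z"
proof -
  assume z: "z \<notin> NN"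
  then have z0: "z \<noteq> 0" using zero_in_NN by auto
  have "exp (LnD z) = (- \<i> * z) * exp (\<i> * of_real pi / 2)"
    unfolding LnD_def using z0 by (simp add: exp_add)
  also have "exp (\<i> * of_real pi / 2) = cis (pi / 2)" by (simp add: cis_conv_exp)
  also have "cis (pi / 2) = \<i>" by (simp add: complex_eq_iff)
  finally have "exp (LnD z) = - \<i> * z * \<i>" by simp
  also have "- \<i> * z * \<i> = z" by (simp add: algebra_simps)
  finally show ?thesis .
qed

lemma LnD_1: "LnD 1 = 0" by (simp add: LnD_def)

lemma LnD_UHP: "0 < Im z \<Longrightarrow> LnD z = Ln z"
proof -
  assume z: "0 < Im z"
  then have zN: "z \<notin> NN" by (simp add: NN_def)
  have "0 < Re (- \<i> * z)" using z by simp
  then have "\<bar>Im (Ln (- \<i> * z))\<bar> < pi / 2" by (rule Re_Ln_pos_lt_imp)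
  then have "- pi < Im (LnD z)" "Im (LnD z) \<le> pi" by (auto simp: LnD_def)
  then show ?thesis using exp_LnD[OF zN] Ln_unique by metis
qed


definition lic :: "nat \<Rightarrow> nat \<Rightarrow> complex" where
  "lic j n = (if n = 0 then 0 else 1 / of_nat n ^ j)"
definition ser :: "nat \<Rightarrow> complex \<Rightarrow> complex" where
  "ser j z = (\<Sum>n. lic j n * z ^ n)"
definition Rf :: "nat \<Rightarrow> complex \<Rightarrow> complex" where
  "Rf j z = LnD z ^ (j - 1) / of_nat (fact (j - 1))"

lemma norm_lic: "norm (lic j n) \<le> 1"
proof (cases "n = 0")
  case False
  then have "1 \<le> real n ^ j" by (simp add: one_le_power)
  then show ?thesis using False by (simp add: lic_def norm_divide norm_power)
qed (simp add: lic_def)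

lemma summable_lic_gen:
  assumes "norm z < 1" shows "summable (\<lambda>n. lic j (n + p) * z ^ n)"
proof (rule summable_comparison_test)
  show "\<exists>N. \<forall>n\<ge>N. norm (lic j (n + p) * z ^ n) \<le> norm z ^ n"
    using norm_lic by (auto simp: norm_mult norm_power intro!: mult_left_le_one_le)
  show "summable (\<lambda>n. norm z ^ n)" using assms by simp
qed

lemma summable_lic: "norm z < 1 \<Longrightarrow> summable (\<lambda>n. lic j n * z ^ n)"
  using summable_lic_gen[of z j 0] by simp

lemma ser_0 [simp]: "ser j 0 = 0"
  by (simp add: ser_def lic_def)

lemma diffs_lic: "diffs (lic (Suc j)) = (\<lambda>n. lic j (Suc n))"
proof
  fix n
  show "diffs (lic (Suc j)) n = lic j (Suc n)"
    unfolding diffs_def lic_def by (simp add: field_simps del: of_nat_Suc)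
qed

lemma ser_deriv:
  assumes "norm z < 1"
  shows "(ser (Suc j) has_field_derivative (\<Sum>n. lic j (Suc n) * z ^ n)) (at z)"
proof -
  have "((\<lambda>z. \<Sum>n. lic (Suc j) n * z ^ n) has_field_derivative (\<Sum>n. diffs (lic (Suc j)) n * z ^ n)) (at z)"
    by (rule termdiffs_strong'[of 1]) (use summable_lic assms in auto)
  then show ?thesis unfolding diffs_lic ser_def[abs_def] .
qed

lemma ser_shift:
  assumes "norm z < 1"
  shows "ser j z = z * (\<Sum>n. lic j (Suc n) * z ^ n)"
proof -
  have "(\<Sum>n. lic j (Suc n) * z ^ Suc n) = ser j z - lic j 0 * z ^ 0"
    unfolding ser_def by (rule suminf_split_head[OF summable_lic[OF assms]])
  moreover have "(\<Sum>n. lic j (Suc n) * z ^ Suc n) = z * (\<Sum>n. lic j (Suc n) * z ^ n)"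
  proof -
    have "(\<Sum>n. z * (lic j (Suc n) * z ^ n)) = z * (\<Sum>n. lic j (Suc n) * z ^ n)"
      by (rule suminf_mult) (use summable_lic_gen[OF assms, of j 1] in simp)
    then show ?thesis by (simp add: mult_ac)
  qed
  ultimately show ?thesis by (simp add: lic_def)
qed

lemma ser_1: "norm z < 1 \<Longrightarrow> ser 1 z = - Ln (1 - z)"
proof -
  assume z: "norm z < 1"
  have "(\<lambda>n. - ((- (- z)) ^ n) / of_nat n) sums ln (1 + - z)"
    by (rule Ln_series') (use z in simp)
  then have "(\<lambda>n. - (- (z ^ n) / of_nat n)) sums - Ln (1 - z)"
    by (intro sums_minus) simp
  moreover have "(\<lambda>n. - (- (z ^ n) / of_nat n)) = (\<lambda>n. lic 1 n * z ^ n)"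
    by (auto simp: lic_def fun_eq_iff)
  ultimately show ?thesis unfolding ser_def by (simp add: sums_iff)
qed

lemma S1_Ln_arg: "z \<in> S1 \<Longrightarrow> 1 - z \<notin> \<real>\<^sub>\<le>\<^sub>0"
  by (auto simp: S1_iff complex_nonpos_Reals_iff)

lemma S1_ne1: "z \<in> S1 \<Longrightarrow> z \<noteq> 1" by (auto simp: S1_iff)

lemma Rf_hol: "Rf j holomorphic_on - NN"
  unfolding Rf_def[abs_def] using LnD_hol by (intro holomorphic_intros) auto

lemma Rf_deriv:
  assumes "1 \<le> j" "x \<notin> NN"
  shows "(Rf (Suc j) has_field_derivative Rf j x / x) (at x)"
proof -
  have "((\<lambda>z. LnD z ^ j / of_nat (fact j)) has_field_derivative
          (of_nat j * (1 / x * LnD x ^ (j - Suc 0))) / of_nat (fact j)) (at x)"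
    by (intro DERIV_cdivide DERIV_power LnD_deriv assms(2))
  moreover have "(of_nat j * (1 / x * LnD x ^ (j - Suc 0))) / of_nat (fact j) = Rf j x / x"
  proof -
    have "(fact j :: nat) = j * fact (j - 1)" using assms(1) fact_reduce[of j, where 'a=nat] by simp
    then show ?thesis using assms(1) by (simp add: Rf_def field_simps)
  qed
  ultimately show ?thesis by (simp add: Rf_def[abs_def])
qed

lemma Rf_1: "1 \<le> j \<Longrightarrow> Rf (Suc j) 1 = 0"
  by (simp add: Rf_def LnD_1)

lemma open_S1_NN: "open (S1 - NN)"
  using open_S1 closed_NN by (simp add: open_Diff)

lemma Li_chain:
  assumes "1 \<le> j"
  shows "\<exists>G \<Phi>. G holomorphic_on S1 \<and> (\<forall>z\<in>ball 0 1. G z = ser j z) \<and>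
           \<Phi> holomorphic_on (- NN) \<and> (\<forall>z\<in>S1 - NN. \<Phi> z = G z + Rf j z * Ln (1 - z))"
  using assms
proof (induction j rule: nat_induct_at_least)
  case base
  show ?case
  proof (intro exI conjI ballI)
    show "(\<lambda>z. - Ln (1 - z)) holomorphic_on S1"
      by (intro holomorphic_intros) (auto dest: S1_Ln_arg)
    show "(\<lambda>z. 0) holomorphic_on - NN" by simp
    fix z
    show "z \<in> ball 0 1 \<Longrightarrow> - Ln (1 - z) = ser 1 z" using ser_1 by simp
    show "z \<in> S1 - NN \<Longrightarrow> 0 = - Ln (1 - z) + Rf 1 z * Ln (1 - z)" by (simp add: Rf_def)
  qed
next
  case (Suc j)
  then obtain G \<Phi> where hG: "G holomorphic_on S1" and sG: "\<forall>z\<in>ball 0 1. G z = ser j z"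
    and hP: "\<Phi> holomorphic_on (- NN)" and eP: "\<forall>z\<in>S1 - NN. \<Phi> z = G z + Rf j z * Ln (1 - z)"
    by blast
  have G0: "G 0 = 0" using sG by simp
  have zS1: "0 \<in> S1" by (simp add: S1_iff)
  define F0 where "F0 = (\<lambda>z. if z = 0 then deriv G 0 else (G z - G 0) / (z - 0))"
  have hF0: "F0 holomorphic_on S1"
    unfolding F0_def by (rule pole_lemma[OF hG]) (simp add: interior_open[OF open_S1] zS1)
  obtain G2 where G2: "\<forall>x\<in>S1. (G2 has_field_derivative F0 x) (at x)"
    using holomorphic_starlike_primitive[of S1 F0 "{}"] hF0 starlike_S1 open_S1
    by (metis finite.emptyI holomorphic_on_imp_continuous_on holomorphic_on_imp_differentiable_at Diff_empty)
  define G3 where "G3 = (\<lambda>z. G2 z - G2 0)"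
  have G3d: "(G3 has_field_derivative F0 x) (at x)" if "x \<in> S1" for x
    unfolding G3_def using G2 that by (auto intro!: derivative_eq_intros)
  have hG3: "G3 holomorphic_on S1"
    using G3d open_S1 by (auto simp: holomorphic_on_open)
  have F0x: "F0 x = G x / x" if "x \<noteq> 0" for x using that G0 by (simp add: F0_def)
  have sG3: "\<forall>z\<in>ball 0 1. G3 z = ser (Suc j) z"
  proof -
    have dH: "((\<lambda>z. G3 z - ser (Suc j) z) has_field_derivative (F0 x - (\<Sum>n. lic j (Suc n) * x ^ n))) (at x)"
      if "x \<in> ball 0 1" for x :: complex
      using G3d[of x] ser_deriv[of x j] ball01_S1 that by (auto intro!: derivative_eq_intros)
    have "continuous_on (ball 0 1) (\<lambda>z. G3 z - ser (Suc j) z)"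
      using dH by (meson DERIV_isCont continuous_at_imp_continuous_on)
    moreover have "\<forall>x\<in>ball 0 1 - {0}. ((\<lambda>z. G3 z - ser (Suc j) z) has_field_derivative 0) (at x)"
    proof
      fix x :: complex assume x: "x \<in> ball 0 1 - {0}"
      have "F0 x - (\<Sum>n. lic j (Suc n) * x ^ n) = 0"
        using x F0x[of x] sG ser_shift[of x j] by (auto simp: field_simps)
      then show "((\<lambda>z. G3 z - ser (Suc j) z) has_field_derivative 0) (at x)" using dH[of x] x by simp
    qed
    ultimately obtain c where c: "\<And>x. x \<in> ball 0 1 \<Longrightarrow> G3 x - ser (Suc j) x = c"
      using DERIV_zero_connected_constant[of "ball (0::complex) 1" "{0}" "\<lambda>z. G3 z - ser (Suc j) z"]
      by auto
    have "c = 0" using c[of 0] by (simp add: G3_def)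
    then show ?thesis using c by auto
  qed
  define R2 where "R2 = Rf (Suc j)"
  have hR2: "R2 holomorphic_on - NN" unfolding R2_def by (rule Rf_hol)
  have R21: "R2 1 = 0" unfolding R2_def using Rf_1 Suc.hyps by simp
  have oneN: "1 \<in> - NN" unfolding NN_def by simp
  define Q where "Q = (\<lambda>z. if z = 1 then deriv R2 1 else (R2 z - R2 1) / (z - 1))"
  have hQ: "Q holomorphic_on - NN"
    unfolding Q_def by (rule pole_lemma[OF hR2]) (use oneN in \<open>simp add: interior_open[OF open_NNc]\<close>)
  define I where "I = (\<lambda>z. \<Phi> z / z + Q z)"
  have hI: "I holomorphic_on - NN"
    unfolding I_def using hP hQ zero_in_NN by (intro holomorphic_intros) auto
  obtain H where H: "\<forall>x\<in>- NN. (H has_field_derivative I x) (at x)"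
    using holomorphic_starlike_primitive[of "- NN" I "{}"] hI starlike_NNc open_NNc
    by (metis finite.emptyI holomorphic_on_imp_continuous_on holomorphic_on_imp_differentiable_at Diff_empty)
  define \<Phi>0 where "\<Phi>0 = (\<lambda>z. G3 z + R2 z * Ln (1 - z))"
  have dD: "((\<lambda>z. \<Phi>0 z - H z) has_field_derivative 0) (at x)" if x: "x \<in> S1 - NN" for x
  proof -
    have x0: "x \<noteq> 0" using x zero_in_NN by auto
    have x1: "x \<noteq> 1" using x S1_ne1 by auto
    have "((\<lambda>z. \<Phi>0 z - H z) has_field_derivative
            (F0 x + (Rf j x / x * Ln (1 - x) + R2 x * (inverse (1 - x) * (0 - 1))) - I x)) (at x)"
      unfolding \<Phi>0_def
      using G3d[of x] Rf_deriv[OF Suc.hyps, of x] H x S1_Ln_arg[of x]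
      by (auto simp: R2_def intro!: derivative_eq_intros)
    moreover have "F0 x + (Rf j x / x * Ln (1 - x) + R2 x * (inverse (1 - x) * (0 - 1))) - I x = 0"
    proof -
      have "\<Phi> x = G x + Rf j x * Ln (1 - x)" using eP x by blast
      moreover have "Q x = R2 x / (x - 1)" using x1 R21 by (simp add: Q_def)
      ultimately show ?thesis using x0 x1 F0x[OF x0]
        by (simp add: I_def field_simps)
    qed
    ultimately show ?thesis by simp
  qed
  have "continuous_on (S1 - NN) (\<lambda>z. \<Phi>0 z - H z)"
    using dD by (meson DERIV_isCont continuous_at_imp_continuous_on)
  then obtain c where c: "\<And>x. x \<in> S1 - NN \<Longrightarrow> \<Phi>0 x - H x = c"
    using DERIV_zero_connected_constant[of "S1 - NN" "{}" "\<lambda>z. \<Phi>0 z - H z"] connected_S1_NN open_S1_NN dD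
    by auto
  show ?case
  proof (intro exI conjI)
    show "G3 holomorphic_on S1" by (rule hG3)
    show "\<forall>z\<in>ball 0 1. G3 z = ser (Suc j) z" by (rule sG3)
    show "(\<lambda>z. H z + c) holomorphic_on - NN"
      using H open_NNc by (auto simp: holomorphic_on_open intro!: derivative_eq_intros)
    show "\<forall>z\<in>S1 - NN. H z + c = G3 z + Rf (Suc j) z * Ln (1 - z)"
    proof
      fix z assume z: "z \<in> S1 - NN"
      have "\<Phi>0 z - H z = c" using c[OF z] .
      then show "H z + c = G3 z + Rf (Suc j) z * Ln (1 - z)"
        by (simp add: \<Phi>0_def R2_def algebra_simps)
    qed
  qed
qed


definition Pk :: "nat \<Rightarrow> nat \<Rightarrow> complex \<Rightarrow> complex" where
  "Pk m k z = (\<Sum>n<k. z ^ (n + 1) / (of_int (int n - int k)) ^ m)"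

lemma Pk_hol: "Pk m k holomorphic_on S"
  unfolding Pk_def[abs_def] by (intro holomorphic_intros) auto

lemma series_id:
  assumes z: "norm z < 1"
  shows "(\<Sum>n. if n = k then 0 else z ^ (n + 1) / (of_int (int n - int k)) ^ m) = z ^ (k + 1) * ser m z + Pk m k z"
proof -
  define a where "a = (\<lambda>n. if n = k then 0 else z ^ (n + 1) / (of_int (int n - int k) :: complex) ^ m)"
  have sh: "(\<lambda>n. a (n + k)) = (\<lambda>n. z ^ (k + 1) * (lic m n * z ^ n))"
  proof
    fix n
    show "a (n + k) = z ^ (k + 1) * (lic m n * z ^ n)"
      by (cases "n = 0") (auto simp: a_def lic_def power_add field_simps)
  qed
  have "(\<lambda>n. z ^ (k + 1) * (lic m n * z ^ n)) sums (z ^ (k + 1) * ser m z)"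
    unfolding ser_def by (intro sums_mult summable_sums summable_lic z)
  then have "(\<lambda>n. a (n + k)) sums (z ^ (k + 1) * ser m z)" by (simp add: sh)
  then have "a sums (z ^ (k + 1) * ser m z + (\<Sum>i<k. a i))" by (simp add: sums_iff_shift)
  moreover have "(\<Sum>i<k. a i) = Pk m k z" unfolding Pk_def a_def by (rule sum.cong) auto
  ultimately show ?thesis by (simp add: a_def sums_iff)
qed

lemma Omega_S1: "Omega \<subseteq> S1" by (auto simp: Omega_def S1_def)

lemma Omega_Ln: "Omega \<inter> \<real>\<^sub>\<le>\<^sub>0 = {}"
  by (auto simp: Omega_def complex_nonpos_Reals_iff complex_is_Real_iff)

lemma Omega_iff: "z \<in> Omega \<longleftrightarrow> Im z \<noteq> 0 \<or> (0 < Re z \<and> Re z < 1)"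
  by (auto simp: Omega_def complex_is_Real_iff)

lemma UHP_Omega: "0 < Im z \<Longrightarrow> z \<in> Omega" by (simp add: Omega_iff)

lemma open_Omega: "open Omega"
proof -
  have "Omega = {z. Im z < 0} \<union> {z. Im z > 0} \<union> ({z. 0 < Re z} \<inter> {z. Re z < 1})"
    by (auto simp: Omega_iff)
  moreover have "open ({z::complex. Im z < 0} \<union> {z. Im z > 0} \<union> ({z. 0 < Re z} \<inter> {z. Re z < 1}))"
    by (intro open_Un open_Int open_halfspace_Im_lt open_halfspace_Im_gt open_halfspace_Re_gt open_halfspace_Re_lt)
  ultimately show ?thesis by simp
qed

lemma connected_Omega: "connected Omega"
proof -
  define St where "St = {z::complex. 0 < Re z} \<inter> {z. Re z < 1}"
  have cS: "convex St" unfolding St_def by (simp add: convex_Int convex_halfspace_Re_gt convex_halfspace_Re_lt)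
  have c1: "connected ({z::complex. Im z > 0} \<union> St)"
  proof (rule connected_Un[OF convex_connected convex_connected[OF cS]])
    show "convex {z::complex. Im z > 0}" by (rule convex_halfspace_Im_gt)
    have "1/2 + \<i> \<in> {z::complex. Im z > 0} \<inter> St" by (simp add: St_def)
    then show "{z::complex. Im z > 0} \<inter> St \<noteq> {}" by blast
  qed
  have c2: "connected ({z::complex. Im z > 0} \<union> St \<union> {z. Im z < 0})"
  proof (rule connected_Un[OF c1 convex_connected])
    show "convex {z::complex. Im z < 0}" by (rule convex_halfspace_Im_lt)
    have "1/2 - \<i> \<in> ({z::complex. Im z > 0} \<union> St) \<inter> {z. Im z < 0}" by (simp add: St_def)
    then show "({z::complex. Im z > 0} \<union> St) \<inter> {z. Im z < 0} \<noteq> {}" by blast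
  qed
  moreover have "{z::complex. Im z > 0} \<union> St \<union> {z. Im z < 0} = Omega"
    by (auto simp: Omega_iff St_def)
  ultimately show ?thesis by simp
qed

definition Lfun :: "nat \<Rightarrow> nat \<Rightarrow> (complex \<Rightarrow> complex) \<Rightarrow> complex \<Rightarrow> complex" where
  "Lfun m k G z = z ^ (k + 1) * G z + Pk m k z + z ^ (k + 1) * Ln z ^ m / of_nat (fact m)"

lemma Lfun_ok:
  assumes hG: "G holomorphic_on S1" and sG: "\<forall>z\<in>ball 0 1. G z = ser m z"
  shows "Lstar_fun m k (Lfun m k G)"
  unfolding Lstar_fun_def
proof
  show "Lfun m k G holomorphic_on Omega"
    unfolding Lfun_def[abs_def]
    using holomorphic_on_subset[OF hG Omega_S1] Omega_Ln
    by (intro holomorphic_intros Pk_hol) auto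
  show "\<forall>z\<in>Omega \<inter> ball 0 1. Lfun m k G z = Lstar_series m k z"
    using sG series_id by (auto simp: Lfun_def Lstar_series_def)
qed

lemma Lstar_unique:
  assumes "Lstar_fun m k L" "Lstar_fun m k L'" "z \<in> Omega"
  shows "L z = L' z"
proof (rule analytic_continuation_open[of "Omega \<inter> ball 0 1" Omega L L' z])
  show "open (Omega \<inter> ball 0 1)" using open_Omega by auto
  have "\<i>/2 \<in> Omega \<inter> ball 0 1" by (simp add: Omega_iff norm_divide)
  then show "Omega \<inter> ball 0 1 \<noteq> {}" by blast
qed (use assms open_Omega connected_Omega in \<open>auto simp: Lstar_fun_def\<close>)

lemma binom_fact:
  "(w + c) ^ e / of_nat (fact e) = (\<Sum>r\<le>e. c ^ r / of_nat (fact r) * (w ^ (e - r) / of_nat (fact (e - r))))"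
  for w c :: complex
proof -
  have "(w + c) ^ e = (\<Sum>r\<le>e. of_nat (e choose r) * c ^ r * w ^ (e - r))"
    using binomial_ring[of c w e] by (simp add: add.commute)
  then have "(w + c) ^ e / of_nat (fact e) = (\<Sum>r\<le>e. of_nat (e choose r) * c ^ r * w ^ (e - r) / of_nat (fact e))"
    by (simp add: sum_divide_distrib)
  also have "\<dots> = (\<Sum>r\<le>e. c ^ r / of_nat (fact r) * (w ^ (e - r) / of_nat (fact (e - r))))"
  proof (rule sum.cong[OF refl])
    fix r assume "r \<in> {..e}"
    then have "(of_nat (e choose r) :: complex) = fact e / (fact r * fact (e - r))"
      by (intro binomial_fact) simp
    then show "of_nat (e choose r) * c ^ r * w ^ (e - r) / of_nat (fact e) = c ^ r / of_nat (fact r) * (w ^ (e - r) / of_nat (fact (e - r)))"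
      by (simp add: field_simps)
  qed
  finally show ?thesis .
qed

lemma rho0_sum:
  assumes "i \<le> m"
  shows "(\<Sum>l<Suc m. rho0 i l * X l) = (\<Sum>r\<le>m - i. (2 * pi * \<i>) ^ r / of_nat (fact r) * X (i + r))"
proof -
  have "(\<Sum>l<Suc m. rho0 i l * X l) = (\<Sum>l\<in>{i..m}. rho0 i l * X l)"
    by (rule sum.mono_neutral_right) (auto simp: rho0_def)
  also have "\<dots> = (\<Sum>l\<in>{0 + i..(m - i) + i}. rho0 i l * X l)" using assms by simp
  also have "\<dots> = (\<Sum>r\<in>{0..m - i}. rho0 i (r + i) * X (r + i))" by (rule sum.shift_bounds_cl_nat_ivl)
  also have "\<dots> = (\<Sum>r\<le>m - i. (2 * pi * \<i>) ^ r / of_nat (fact r) * X (i + r))"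
    by (rule sum.cong) (auto simp: rho0_def add.commute atLeast0AtMost)
  finally show ?thesis .
qed

lemma rho1_sum:
  assumes "i \<le> m" "1 \<le> m"
  shows "(\<Sum>l<Suc m. rho1 i l * X l) = (if i = 0 then X 0 - 2 * pi * \<i> * X 1 else X i)"
proof (cases "i = 0")
  case True
  have "(\<Sum>l<Suc m. rho1 i l * X l) = (\<Sum>l\<in>{0,1}. rho1 i l * X l)"
    by (rule sum.mono_neutral_right) (use assms True in \<open>auto simp: rho1_def\<close>)
  then show ?thesis using True by (simp add: rho1_def)
next
  case False
  have "(\<Sum>l<Suc m. rho1 i l * X l) = (\<Sum>l\<in>{i}. rho1 i l * X l)"
    by (rule sum.mono_neutral_right) (use assms False in \<open>auto simp: rho1_def\<close>)
  then show ?thesis using False by (simp add: rho1_def)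
qed


lemma Ln_neg_UHP: "0 < Im z \<Longrightarrow> \<i> * of_real pi + Ln (- z) = Ln z"
proof -
  assume z: "0 < Im z"
  then have z0: "z \<noteq> 0" by auto
  have i: "0 < Im (Ln z)" "Im (Ln z) < pi" using Im_Ln_pos_lt_imp[OF z] by auto
  have "exp (Ln z - \<i> * of_real pi) = - z" using z0 by (simp add: exp_diff)
  then have "Ln (- z) = Ln z - \<i> * of_real pi" using i by (intro Ln_unique) auto
  then show ?thesis by simp
qed

lemma Ln_half: "0 < Re w \<Longrightarrow> of_real (ln 2) + Ln (w / 2) = Ln w"
proof -
  assume w: "0 < Re w"
  then have w0: "w \<noteq> 0" by auto
  have "0 < Re (w / 2)" using w by simp
  then have i: "\<bar>Im (Ln (w / 2))\<bar> < pi / 2" by (rule Re_Ln_pos_lt_imp)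
  have "exp (of_real (ln 2) + Ln (w / 2)) = w" using w0
    by (simp add: exp_add exp_of_real)
  moreover have "- pi < Im (of_real (ln 2) + Ln (w / 2))" "Im (of_real (ln 2) + Ln (w / 2)) \<le> pi"
    using i by auto
  ultimately show ?thesis using Ln_unique by metis
qed

lemma near_m1:
  assumes "z \<in> UHP" "dist z (-1) < 1"
  shows "0 < Im z" "Re z < 0" "z \<in> Omega" "z \<in> S1 - NN"
proof -
  show "0 < Im z" using assms by (simp add: UHP_def)
  have "\<bar>Re (z + 1)\<bar> < 1" using assms(2) abs_Re_le_cmod[of "z+1"] by (simp add: dist_norm)
  then show "Re z < 0" by simp
  show "z \<in> Omega" using \<open>0 < Im z\<close> by (rule UHP_Omega)
  show "z \<in> S1 - NN" using \<open>0 < Im z\<close> by (simp add: S1_iff NN_def)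
qed

lemma Bvec_expand:
  assumes L: "L z = Lfun m k G z" and l: "l \<le> m"
  shows "Bvec m k L l z = z ^ (k + 1) * (Ln z ^ (m - l) / of_nat (fact (m - l))) +
            (if l = 0 then z ^ (k + 1) * G z + Pk m k z else 0)"
  using L l by (auto simp: Bvec_def bfun_def Lfun_def)

lemma Z0_alg:
  assumes i: "i \<le> m"
    and X: "\<And>l. l \<le> m \<Longrightarrow> X l = z ^ (k + 1) * (w ^ (m - l) / of_nat (fact (m - l))) + (if l = 0 then T else 0)"
  shows "(\<Sum>l<Suc m. rho0 i l * X l) = (if i = 0 then T else 0) + z ^ (k + 1) / of_nat (fact (m - i)) * (w + 2 * pi * \<i>) ^ (m - i)"
proof -
  define c where "c = 2 * pi * \<i>"
  have "(\<Sum>l<Suc m. rho0 i l * X l) = (\<Sum>r\<le>m - i. c ^ r / of_nat (fact r) * X (i + r))"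
    unfolding c_def by (rule rho0_sum[OF i])
  also have "\<dots> = (\<Sum>r\<le>m - i. z ^ (k + 1) * (c ^ r / of_nat (fact r) * (w ^ ((m - i) - r) / of_nat (fact ((m - i) - r)))))
                + (\<Sum>r\<le>m - i. c ^ r / of_nat (fact r) * (if i + r = 0 then T else 0))"
    by (subst sum.distrib[symmetric], rule sum.cong[OF refl]) (use i in \<open>auto simp: X algebra_simps\<close>)
  also have "(\<Sum>r\<le>m - i. c ^ r / of_nat (fact r) * (if i + r = 0 then T else 0)) = (if i = 0 then T else 0)"
  proof (cases "i = 0")
    case True
    have "(\<Sum>r\<le>m - i. c ^ r / of_nat (fact r) * (if i + r = 0 then T else 0)) =
          (\<Sum>r\<in>{0}. c ^ r / of_nat (fact r) * (if i + r = 0 then T else 0))"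
      by (rule sum.mono_neutral_right) auto
    then show ?thesis using True by simp
  qed simp
  also have "(\<Sum>r\<le>m - i. z ^ (k + 1) * (c ^ r / of_nat (fact r) * (w ^ ((m - i) - r) / of_nat (fact ((m - i) - r))))) =
             z ^ (k + 1) * ((w + c) ^ (m - i) / of_nat (fact (m - i)))"
    by (subst binom_fact) (simp only: sum_distrib_left)
  finally show ?thesis by (simp add: c_def field_simps)
qed

lemma Z0_mono:
  assumes m: "1 \<le> m" and hG: "G holomorphic_on S1" and L: "\<forall>z\<in>Omega. L z = Lfun m k G z"
    and Z: "Z0_loop \<gamma>"
  shows "monodromy_is \<gamma> (m + 1) (Bvec m k L) rho0"
proof -
  have pg: "path \<gamma>" using Z simple_path_imp_path by (auto simp: Z0_loop_def)
  have g0: "\<gamma> 0 = -1" and g1: "\<gamma> 1 = -1" using Z by (auto simp: Z0_loop_def pathstart_def pathfinish_def)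
  have n0: "0 \<notin> path_image \<gamma>" and wn: "winding_number \<gamma> 0 = 1"
    and avoid: "path_image \<gamma> \<inter> {z. z \<in> \<real> \<and> 1 \<le> Re z} = {}" using Z by (auto simp: Z0_loop_def)
  obtain p where pp: "path p" and pd: "pathfinish p - pathstart p = 2 * of_real pi * \<i> * winding_number \<gamma> 0"
    and pe: "\<And>t. t \<in> {0..1} \<Longrightarrow> \<gamma> t = 0 + exp (p t)"
    using winding_number_as_continuous_log[OF pg n0] by blast
  define q where "q = (\<lambda>t. p t - p 0 + \<i> * of_real pi)"
  have cq: "continuous_on {0..1} q" unfolding q_def using pp
    by (intro continuous_intros) (auto simp: path_def)
  have ep0: "exp (p 0) = -1" using pe[of 0] g0 by simp
  have eq: "exp (q t) = 1 * \<gamma> t + 0" if "t \<in> {0..1}" for t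
  proof -
    have "exp (q t) = exp (p t) * exp (\<i> * of_real pi) / exp (p 0)"
      by (simp add: q_def exp_diff exp_add)
    also have "\<dots> = \<gamma> t" using ep0 pe[OF that] by simp
    finally show ?thesis by simp
  qed
  have nz: "1 * \<gamma> t + 0 \<noteq> 0" if "t \<in> {0..1}" for t using pe[OF that] by simp
  have q0: "q 0 = \<i> * of_real pi" by (simp add: q_def)
  have q1: "q 1 = q 0 + 2 * pi * \<i>"
    using pd wn by (simp add: q_def pathstart_def pathfinish_def algebra_simps)
  define V where "V = S1 - {0}"
  have oV: "open V" unfolding V_def using open_S1 by (simp add: open_delete)
  have sV: "path_image \<gamma> \<subseteq> V" using n0 avoid by (auto simp: V_def S1_def)
  define T where "T = (\<lambda>z. z ^ (k + 1) * G z + Pk m k z)"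
  have hT: "T holomorphic_on V" unfolding T_def V_def
    using holomorphic_on_subset[OF hG] by (intro holomorphic_intros Pk_hol) auto
  define A where "A = (\<lambda>(i::nat) z. if i = 0 then T z else 0)"
  define B where "B = (\<lambda>i (z::complex). z ^ (k + 1) / of_nat (fact (m - i)))"
  define h where "h = (\<lambda>i t z. A i z + B i z * (q t + Ln ((1 * z + 0) / (1 * \<gamma> t + 0))) ^ (m - i))"
  show ?thesis
  proof (rule monodromy_from_family[OF pg g0 g1, of "m + 1" h])
    fix i assume i: "i < m + 1"
    have hA: "A i holomorphic_on V" using hT by (cases "i = 0") (auto simp: A_def[abs_def])
    have hB: "B i holomorphic_on V" unfolding B_def by (intro holomorphic_intros) auto
    have anc: "ancont_along \<gamma> (h i)"
      unfolding h_def by (rule ancont_family[OF pg cq _ nz eq oV sV hA hB]) auto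
    have ev: "\<forall>\<^sub>F z in at (-1) within UHP. h i 0 z = Bvec m k L i z \<and>
               h i 1 z = (\<Sum>l<m + 1. rho0 i l * Bvec m k L l z)"
      unfolding eventually_at
    proof (intro exI[of _ 1] conjI ballI impI)
      fix z assume z: "z \<in> UHP" "z \<noteq> -1 \<and> dist z (-1) < 1"
      have zi: "0 < Im z" and zO: "z \<in> Omega" using near_m1[of z] z by auto
      have l0: "q 0 + Ln ((1 * z + 0) / (1 * \<gamma> 0 + 0)) = Ln z"
        using Ln_neg_UHP[OF zi] q0 g0 by simp
      have l1: "q 1 + Ln ((1 * z + 0) / (1 * \<gamma> 1 + 0)) = Ln z + 2 * pi * \<i>"
        using Ln_neg_UHP[OF zi] q0 q1 g1 by simp
      have X: "\<And>l. l \<le> m \<Longrightarrow> Bvec m k L l z = z ^ (k + 1) * (Ln z ^ (m - l) / of_nat (fact (m - l))) + (if l = 0 then T z else 0)"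
        using Bvec_expand[of L z m k G] L zO by (simp add: T_def)
      have im: "i \<le> m" using i by simp
      show "h i 0 z = Bvec m k L i z"
        unfolding h_def using l0 X[OF im] by (simp add: A_def B_def)
      have "(\<Sum>l<m + 1. rho0 i l * Bvec m k L l z) = (if i = 0 then T z else 0) + z ^ (k + 1) / of_nat (fact (m - i)) * (Ln z + 2 * pi * \<i>) ^ (m - i)"
        using Z0_alg[OF im X] by simp
      then show "h i 1 z = (\<Sum>l<m + 1. rho0 i l * Bvec m k L l z)"
        unfolding h_def using l1 by (simp add: A_def B_def)
    qed simp
    show "ancont_along \<gamma> (h i) \<and>
        (\<forall>\<^sub>F z in at (-1) within UHP. h i 0 z = Bvec m k L i z) \<and>
        (\<forall>\<^sub>F z in at (-1) within UHP. h i 1 z = (\<Sum>l<m + 1. rho0 i l * Bvec m k L l z))"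
      using anc ev by (auto elim: eventually_mono)
  qed
qed


definition UT :: "nat \<Rightarrow> (nat \<Rightarrow> nat \<Rightarrow> complex) set" where
  "UT n = {A. \<forall>i<n. \<forall>l<n. (l < i \<longrightarrow> A i l = 0) \<and> A i i = 1}"

lemma mmul_assoc: "mmul n (mmul n A B) C i l = mmul n A (mmul n B C) i l"
  unfolding mmul_def
  by (simp add: sum_distrib_left sum_distrib_right mult.assoc) (rule sum.swap)

lemma mmul_idm_left: "i < n \<Longrightarrow> mmul n idm A i l = A i l"
  unfolding mmul_def idm_def by (simp add: if_distrib[of "\<lambda>x. x * _"] cong: if_cong)

lemma mmul_idm_right: "l < n \<Longrightarrow> mmul n A idm i l = A i l"
  unfolding mmul_def idm_def by (simp add: if_distrib[of "\<lambda>x. _ * x"] cong: if_cong)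

lemma mmul_cong_right: "(\<And>j. j < n \<Longrightarrow> X j l = Y j l) \<Longrightarrow> mmul n A X i l = mmul n A Y i l"
  unfolding mmul_def by (rule sum.cong) auto

lemma mmul_cong_left: "(\<And>j. j < n \<Longrightarrow> X i j = Y i j) \<Longrightarrow> mmul n X A i l = mmul n Y A i l"
  unfolding mmul_def by (rule sum.cong) auto

lemma mpow_Suc_right: "i < n \<Longrightarrow> l < n \<Longrightarrow> mpow n A (Suc p) i l = mmul n (mpow n A p) A i l"
proof (induction p arbitrary: i l)
  case 0
  then show ?case by (simp add: mmul_idm_left mmul_idm_right)
next
  case (Suc p)
  have "mpow n A (Suc (Suc p)) i l = mmul n A (mpow n A (Suc p)) i l" by simp
  also have "\<dots> = mmul n A (mmul n (mpow n A p) A) i l"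
    by (rule mmul_cong_right) (use Suc in auto)
  also have "\<dots> = mmul n (mmul n A (mpow n A p)) A i l" by (simp add: mmul_assoc)
  finally show ?case by simp
qed

lemma nil_pow:
  assumes "\<forall>i<n. \<forall>l<n. l \<le> i \<longrightarrow> N i l = 0"
  shows "i < n \<Longrightarrow> l < n \<Longrightarrow> l < i + p \<Longrightarrow> mpow n N p i l = 0"
proof (induction p arbitrary: i l)
  case 0
  then show ?case by (simp add: idm_def)
next
  case (Suc p)
  have "mpow n N (Suc p) i l = (\<Sum>j<n. N i j * mpow n N p j l)" by (simp add: mmul_def)
  also have "\<dots> = 0"
  proof (rule sum.neutral, rule ballI)
    fix j assume j: "j \<in> {..<n}"
    show "N i j * mpow n N p j l = 0"
    proof (cases "j \<le> i")
      case True then show ?thesis using assms Suc.prems j by auto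
    next
      case False then show ?thesis using Suc.IH[of j l] Suc.prems j by auto
    qed
  qed
  finally show ?case .
qed

lemma UT_nil:
  assumes "A \<in> UT n"
  shows "\<forall>i<n. \<forall>l<n. l \<le> i \<longrightarrow> (\<lambda>i l. A i l - idm i l) i l = 0"
  using assms unfolding UT_def idm_def by (auto simp: le_less)

lemma UT_mmul: "A \<in> UT n \<Longrightarrow> B \<in> UT n \<Longrightarrow> mmul n A B \<in> UT n"
proof -
  assume A: "A \<in> UT n" and B: "B \<in> UT n"
  have lo: "mmul n A B i l = 0" if "i < n" "l < n" "l < i" for i l
    unfolding mmul_def
  proof (rule sum.neutral, rule ballI)
    fix j assume j: "j \<in> {..<n}"
    show "A i j * B j l = 0"
      using A B that j unfolding UT_def by (cases "j < i") auto
  qed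
  have di: "mmul n A B i i = 1" if "i < n" for i
  proof -
    have "mmul n A B i i = (\<Sum>j\<in>{i}. A i j * B j i)"
      unfolding mmul_def
    proof (rule sum.mono_neutral_right)
      show "\<forall>j\<in>{..<n} - {i}. A i j * B j i = 0"
        using A B that unfolding UT_def by (auto simp: neq_iff)
    qed (use that in auto)
    then show ?thesis using A B that unfolding UT_def by auto
  qed
  show ?thesis using lo di unfolding UT_def by auto
qed

lemma mmul_sum_right: "mmul n A (\<lambda>i l. \<Sum>p<q. c p * X p i l) i l = (\<Sum>p<q. c p * mmul n A (X p) i l)"
  unfolding mmul_def by (simp add: sum_distrib_left mult.left_commute) (rule sum.swap)

lemma mmul_sum_left: "mmul n (\<lambda>i l. \<Sum>p<q. c p * X p i l) A i l = (\<Sum>p<q. c p * mmul n (X p) A i l)"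
  unfolding mmul_def by (simp add: sum_distrib_left sum_distrib_right mult.assoc) (rule sum.swap)

lemma mmul_add_left: "mmul n (\<lambda>i l. X i l + Y i l) A i l = mmul n X A i l + mmul n Y A i l"
  unfolding mmul_def by (simp add: distrib_right sum.distrib)

lemma mmul_add_right: "mmul n A (\<lambda>i l. X i l + Y i l) i l = mmul n A X i l + mmul n A Y i l"
  unfolding mmul_def by (simp add: distrib_left sum.distrib)

lemma telesc: "(\<Sum>p<q. (-1::complex)^p * (a p + a (Suc p))) = a 0 - (-1)^q * a q"
  by (induction q) (auto simp: algebra_simps)

lemma UT_inv:
  assumes A: "A \<in> UT n"
  shows "\<exists>B\<in>UT n. meq n (mmul n A B) idm \<and> meq n (mmul n B A) idm"
proof -
  define N where "N = (\<lambda>i l. A i l - idm i l)"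
  have Nn: "\<forall>i<n. \<forall>l<n. l \<le> i \<longrightarrow> N i l = 0" using UT_nil[OF A] by (simp add: N_def)
  have Nz: "mpow n N p i l = 0" if "i<n" "l<n" "l < i + p" for i l p using nil_pow[OF Nn] that by blast
  have AN: "A i l = idm i l + N i l" for i l by (simp add: N_def)
  define B where "B = (\<lambda>i l. \<Sum>p<n. (-1::complex)^p * mpow n N p i l)"
  have BU: "B \<in> UT n"
  proof -
    have "B i l = 0" if "i<n" "l<n" "l<i" for i l
      unfolding B_def by (rule sum.neutral) (use Nz that in auto)
    moreover have "B i i = 1" if "i<n" for i
    proof -
      have "B i i = (\<Sum>p\<in>{0}. (-1::complex)^p * mpow n N p i i)"
        unfolding B_def by (rule sum.mono_neutral_right) (use that Nz in auto)
      then show ?thesis by (simp add: idm_def)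
    qed
    ultimately show ?thesis unfolding UT_def by auto
  qed
  have r: "mmul n A B i l = idm i l" if "i<n" "l<n" for i l
  proof -
    have "mmul n A B i l = (\<Sum>p<n. (-1)^p * mmul n A (mpow n N p) i l)"
      unfolding B_def by (rule mmul_sum_right)
    also have "\<dots> = (\<Sum>p<n. (-1)^p * (mpow n N p i l + mpow n N (Suc p) i l))"
    proof (rule sum.cong[OF refl])
      fix p
      have "mmul n A (mpow n N p) i l = mmul n (\<lambda>i l. idm i l + N i l) (mpow n N p) i l"
        by (simp add: AN[abs_def])
      also have "\<dots> = mpow n N p i l + mpow n N (Suc p) i l"
        by (simp add: mmul_add_left mmul_idm_left that)
      finally show "(-1)^p * mmul n A (mpow n N p) i l = (-1)^p * (mpow n N p i l + mpow n N (Suc p) i l)" by simp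
    qed
    also have "\<dots> = idm i l" by (subst telesc) (use Nz that in auto)
    finally show ?thesis .
  qed
  have l: "mmul n B A i l = idm i l" if "i<n" "l<n" for i l
  proof -
    have "mmul n B A i l = (\<Sum>p<n. (-1)^p * mmul n (mpow n N p) A i l)"
      unfolding B_def by (rule mmul_sum_left)
    also have "\<dots> = (\<Sum>p<n. (-1)^p * (mpow n N p i l + mpow n N (Suc p) i l))"
    proof (rule sum.cong[OF refl])
      fix p
      have "mmul n (mpow n N p) A i l = mmul n (mpow n N p) (\<lambda>i l. idm i l + N i l) i l"
        by (simp add: AN[abs_def])
      also have "\<dots> = mpow n N p i l + mpow n N (Suc p) i l"
        using mpow_Suc_right[OF that, of N p] by (simp add: mmul_add_right mmul_idm_right that)
      finally show "(-1)^p * mmul n (mpow n N p) A i l = (-1)^p * (mpow n N p i l + mpow n N (Suc p) i l)" by simp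
    qed
    also have "\<dots> = idm i l" by (subst telesc) (use Nz that in auto)
    finally show ?thesis .
  qed
  show ?thesis using BU r l unfolding meq_def by blast
qed

lemma unipotent_part: "\<exists>U. unipotent_subgroup n U \<and> rho0 \<in> U \<and> rho1 \<in> U"
proof (intro exI conjI)
  show "rho0 \<in> UT n" unfolding UT_def rho0_def by auto
  show "rho1 \<in> UT n" unfolding UT_def rho1_def by auto
  show "unipotent_subgroup n (UT n)"
    unfolding unipotent_subgroup_def
  proof (intro conjI ballI)
    show "idm \<in> UT n" unfolding UT_def idm_def by auto
    fix A assume A: "A \<in> UT n"
    show "\<exists>B\<in>UT n. meq n (mmul n A B) idm \<and> meq n (mmul n B A) idm" by (rule UT_inv[OF A])
    show "meq n (mpow n (\<lambda>i l. A i l - idm i l) n) (\<lambda>i l. 0)"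
      unfolding meq_def using nil_pow[OF UT_nil[OF A]] by auto
    fix B assume B: "B \<in> UT n"
    show "\<exists>C\<in>UT n. meq n C (mmul n A B)" using UT_mmul[OF A B] unfolding meq_def by blast
  qed
qed


lemma Z1_mono:
  assumes m: "1 \<le> m" and hP: "\<Phi> holomorphic_on (- NN)"
    and eP: "\<forall>z\<in>S1 - NN. \<Phi> z = G z + Rf m z * Ln (1 - z)"
    and L: "\<forall>z\<in>Omega. L z = Lfun m k G z"
    and Z: "Z1_loop \<gamma>"
  shows "monodromy_is \<gamma> (m + 1) (Bvec m k L) rho1"
proof -
  have pg: "path \<gamma>" using Z simple_path_imp_path by (auto simp: Z1_loop_def)
  have g0: "\<gamma> 0 = -1" and g1: "\<gamma> 1 = -1" using Z by (auto simp: Z1_loop_def pathstart_def pathfinish_def)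
  have n1: "1 \<notin> path_image \<gamma>" and wn: "winding_number \<gamma> 1 = 1"
    and avoid: "path_image \<gamma> \<inter> {z. Re z = 0 \<and> Im z \<le> 0} = {}" using Z by (auto simp: Z1_loop_def)
  obtain p where pp: "path p" and pd: "pathfinish p - pathstart p = 2 * of_real pi * \<i> * winding_number \<gamma> 1"
    and pe: "\<And>t. t \<in> {0..1} \<Longrightarrow> \<gamma> t = 1 + exp (p t)"
    using winding_number_as_continuous_log[OF pg n1] by blast
  define q where "q = (\<lambda>t. p t - p 0 + of_real (ln 2))"
  have cq: "continuous_on {0..1} q" unfolding q_def using pp
    by (intro continuous_intros) (auto simp: path_def)
  have "exp (p 0) = \<gamma> 0 - 1" using pe[of 0] by simp
  then have ep0: "exp (p 0) = -2" using g0 by simp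
  have eq: "exp (q t) = (-1) * \<gamma> t + 1" if "t \<in> {0..1}" for t
  proof -
    have "exp (q t) = exp (p t) * exp (of_real (ln 2)) / exp (p 0)"
      by (simp add: q_def exp_diff exp_add)
    also have "\<dots> = - exp (p t)" using ep0 by (simp add: exp_of_real)
    also have "\<dots> = (-1) * \<gamma> t + 1" using pe[OF that] by simp
    finally show ?thesis .
  qed
  have nz: "(-1) * \<gamma> t + 1 \<noteq> 0" if "t \<in> {0..1}" for t using eq[OF that] by (metis exp_not_eq_zero)
  have q0: "q 0 = of_real (ln 2)" by (simp add: q_def)
  have q1: "q 1 = q 0 + 2 * pi * \<i>"
    using pd wn by (simp add: q_def pathstart_def pathfinish_def algebra_simps)
  define V where "V = - NN - {1}"
  have oV: "open V" unfolding V_def using open_NNc by (simp add: open_delete)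
  have sV: "path_image \<gamma> \<subseteq> V" using n1 avoid by (auto simp: V_def NN_def)
  have VN: "V \<subseteq> - NN" by (auto simp: V_def)
  have hLnD: "LnD holomorphic_on V" using LnD_hol VN holomorphic_on_subset by blast
  have hP': "\<Phi> holomorphic_on V" using hP VN holomorphic_on_subset by blast
  have hR: "Rf m holomorphic_on V" using Rf_hol VN holomorphic_on_subset by blast
  define A where "A = (\<lambda>(i::nat) z. if i = 0 then z ^ (k + 1) * \<Phi> z + Pk m k z + z ^ (k + 1) * LnD z ^ m / of_nat (fact m)
                          else z ^ (k + 1) * LnD z ^ (m - i) / of_nat (fact (m - i)))"
  define B where "B = (\<lambda>(i::nat) z. if i = 0 then - (z ^ (k + 1) * Rf m z) else 0)"
  define h where "h = (\<lambda>i t z. A i z + B i z * (q t + Ln (((-1) * z + 1) / ((-1) * \<gamma> t + 1)))  ^ 1)"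
  show ?thesis
  proof (rule monodromy_from_family[OF pg g0 g1, of "m + 1" h])
    fix i assume i: "i < m + 1"
    have hA: "A i holomorphic_on V"
      using hLnD hP' by (cases "i = 0") (auto simp: A_def[abs_def] intro!: holomorphic_intros Pk_hol)
    have hB: "B i holomorphic_on V"
      using hR by (cases "i = 0") (auto simp: B_def[abs_def] intro!: holomorphic_intros)
    have anc: "ancont_along \<gamma> (h i)"
      unfolding h_def by (rule ancont_family[OF pg cq _ nz eq oV sV hA hB]) auto
    have ev: "\<forall>\<^sub>F z in at (-1) within UHP. h i 0 z = Bvec m k L i z \<and>
               h i 1 z = (\<Sum>l<m + 1. rho1 i l * Bvec m k L l z)"
      unfolding eventually_at
    proof (intro exI[of _ 1] conjI ballI impI)
      fix z assume z: "z \<in> UHP" "z \<noteq> -1 \<and> dist z (-1) < 1"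
      have zi: "0 < Im z" and zr: "Re z < 0" and zO: "z \<in> Omega" and zS: "z \<in> S1 - NN"
        using near_m1[of z] z by auto
      have "0 < Re (1 - z)" using zr by simp
      then have lh: "of_real (ln 2) + Ln ((1 - z) / 2) = Ln (1 - z)" by (rule Ln_half)
      have l0: "q 0 + Ln (((-1) * z + 1) / ((-1) * \<gamma> 0 + 1)) = Ln (1 - z)"
        using lh q0 g0 by simp
      have l1: "q 1 + Ln (((-1) * z + 1) / ((-1) * \<gamma> 1 + 1)) = Ln (1 - z) + 2 * pi * \<i>"
        using lh q0 q1 g1 by simp
      have LD: "LnD z = Ln z" using LnD_UHP[OF zi] .
      have Pz: "\<Phi> z = G z + Rf m z * Ln (1 - z)" using eP zS by blast
      have Lz: "L z = Lfun m k G z" using L zO by blast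
      have im: "i \<le> m" using i by simp
      have sum: "(\<Sum>l<m + 1. rho1 i l * Bvec m k L l z) =
                   (if i = 0 then Bvec m k L 0 z - 2 * pi * \<i> * Bvec m k L 1 z else Bvec m k L i z)"
        using rho1_sum[OF im m, of "\<lambda>l. Bvec m k L l z"] by simp
      show "h i 0 z = Bvec m k L i z"
      proof (cases "i = 0")
        case True
        then show ?thesis unfolding h_def using l0 LD Pz Lz
          by (simp add: A_def B_def Bvec_def Lfun_def algebra_simps)
      next
        case False
        then show ?thesis unfolding h_def using LD
          by (simp add: A_def B_def Bvec_def bfun_def)
      qed
      show "h i 1 z = (\<Sum>l<m + 1. rho1 i l * Bvec m k L l z)"
      proof (cases "i = 0")
        case True
        have R: "Rf m z = Ln z ^ (m - 1) / of_nat (fact (m - 1))" using LD by (simp add: Rf_def)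
        show ?thesis unfolding h_def sum using True l1 LD Pz Lz m R
          by (simp add: A_def B_def Bvec_def Lfun_def bfun_def algebra_simps add_divide_distrib)
      next
        case False
        then show ?thesis unfolding h_def sum using LD
          by (simp add: A_def B_def Bvec_def bfun_def)
      qed
    qed simp
    show "ancont_along \<gamma> (h i) \<and>
        (\<forall>\<^sub>F z in at (-1) within UHP. h i 0 z = Bvec m k L i z) \<and>
        (\<forall>\<^sub>F z in at (-1) within UHP. h i 1 z = (\<Sum>l<m + 1. rho1 i l * Bvec m k L l z))"
      using anc ev by (auto elim: eventually_mono)
  qed
qed

theorem theorem8p5:
  fixes m k :: nat
  assumes "1 \<le> m"
  shows "(\<exists>L. Lstar_fun m k L) \<and>
    (\<forall>L. Lstar_fun m k L \<longrightarrow>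
       (\<forall>\<gamma>. Z0_loop \<gamma> \<longrightarrow> monodromy_is \<gamma> (m + 1) (Bvec m k L) rho0) \<and>
       (\<forall>\<gamma>. Z1_loop \<gamma> \<longrightarrow> monodromy_is \<gamma> (m + 1) (Bvec m k L) rho1)) \<and>
    (\<exists>U. unipotent_subgroup (m + 1) U \<and> rho0 \<in> U \<and> rho1 \<in> U)"
proof -
  obtain G \<Phi> where hG: "G holomorphic_on S1" and sG: "\<forall>z\<in>ball 0 1. G z = ser m z"
    and hP: "\<Phi> holomorphic_on (- NN)" and eP: "\<forall>z\<in>S1 - NN. \<Phi> z = G z + Rf m z * Ln (1 - z)"
    using Li_chain[OF assms] by blast
  have Lok: "Lstar_fun m k (Lfun m k G)" by (rule Lfun_ok[OF hG sG])
  have part2: "(\<forall>\<gamma>. Z0_loop \<gamma> \<longrightarrow> monodromy_is \<gamma> (m + 1) (Bvec m k L) rho0) \<and>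
       (\<forall>\<gamma>. Z1_loop \<gamma> \<longrightarrow> monodromy_is \<gamma> (m + 1) (Bvec m k L) rho1)" if L: "Lstar_fun m k L" for L
  proof -
    have LL: "\<forall>z\<in>Omega. L z = Lfun m k G z" using Lstar_unique[OF L Lok] by blast
    show ?thesis using Z0_mono[OF assms hG LL] Z1_mono[OF assms hP eP LL] by blast
  qed
  show ?thesis using Lok part2 unipotent_part by blast
qed


end
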